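(* Let $I$ be a finite set of cardinality $n+1$ and let $(G,(K_{\{i\}})_{i\in I})$ be a subgroup geometry system with coset complex $X$. Then the symmetrization $X^{\circledast S_I}=\circledast_{\pi\in S_I}\pi(X)$ is isomorphic (as an $(n+1)$-partite clique complex) to the coset complex $X\bigl(G^{(n+1)!},(\prod_{\pi\in S_I}K_{\{\pi(i)\}})_{i\in I}\bigr)$, and $\bigl(G^{(n+1)!},(\prod_{\pi\in S_I}K_{\{\pi(i)\}})_{i\in I}\bigr)$ is a subgroup geometry system.
   Context: Subgroup geometry system: with $K_\tau=\bigcap_{i\in\tau}K_{\{i\}}$ ($\tau\ne\emptyset$), $K_\emptyset=G$: (A1) $K_{\tau\cap\tau'}=\langle K_\tau,K_{\tau'}\rangle$ for all $\tau,\tau'\subseteq I$; (A2) $K_\tau K_{\{i\}}=\bigcap_{j\in\tau}K_{\{j\}}K_{\{i\}}$ for $\tau\subsetneq I$, $i\in I\setminus\tau$; (A3) $K_I\ne K_{I\setminus\{i\}}$ for every $i$. Coset complex $X(G,(K_{\{i\}})_{i\in I})$: vertices are cosets $gK_{\{i\}}$, the part $V^i$ being the cosets of $K_{\{i\}}$; $gK_{\{i\}}\sim g'K_{\{j\}}$ iff $i\ne j$ and they intersect; $X$ is the clique complex of this $(n+1)$-partite graph. Partite product of $(n+1)$-partite graphs $G_1,G_2$ with parts $(V_1^i)_{i\in I},(V_2^i)_{i\in I}$: parts $(V_1^i\times V_2^i)_{i\in I}$, with $(a,b)\in V_1^i\times V_2^i$ adjacent to $(c,d)\in V_1^j\times V_2^j$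 ($i\ne j$) iff $\{a,c\}\in E_1$ and $\{b,d\}\in E_2$; the product of clique complexes is the clique complex of the product graph. For a permutation $\pi$ of $I$, $\pi(X)$ is the same graph with parts relabelled so that its $i$-th part is $V^{\pi(i)}$. $\prod_{\pi\in S_I}K_{\{\pi(i)\}}$ is the direct product subgroup of $G^{S_I}\cong G^{(n+1)!}$. *)

theory Defs
  imports "HOL-Algebra.Algebra" "HOL-Combinatorics.Permutations"
begin

definition Ktau :: "('g, 'b) monoid_scheme \<Rightarrow> ('i \<Rightarrow> 'g set) \<Rightarrow> 'i set \<Rightarrow> 'g set" where
  "Ktau G K \<tau> = (if \<tau> = {} then carrier G else (\<Inter>i\<in>\<tau>. K i))"

definition subgroup_geometry_system ::
    "('g, 'b) monoid_scheme \<Rightarrow> 'i set \<Rightarrow> ('i \<Rightarrow> 'g set) \<Rightarrow> bool" where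
  "subgroup_geometry_system G I K \<longleftrightarrow>
     group G \<and> finite I \<and> (\<forall>i\<in>I. subgroup (K i) G) \<and>
     (\<forall>\<tau> \<tau>'. \<tau> \<subseteq> I \<longrightarrow> \<tau>' \<subseteq> I \<longrightarrow>
        Ktau G K (\<tau> \<inter> \<tau>') = generate G (Ktau G K \<tau> \<union> Ktau G K \<tau>')) \<and>
     (\<forall>\<tau> i. \<tau> \<subset> I \<longrightarrow> i \<in> I - \<tau> \<longrightarrow>
        Ktau G K \<tau> <#>\<^bsub>G\<^esub> K i = carrier G \<inter> (\<Inter>j\<in>\<tau>. K j <#>\<^bsub>G\<^esub> K i)) \<and>
     (\<forall>i\<in>I. Ktau G K I \<noteq> Ktau G K (I - {i}))"

text \<open>A partite graph: family of parts indexed by I, and an adjacency relation.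
  Its clique complex is determined by it.\<close>
type_synonym ('i, 'v) partite_graph = "('i \<Rightarrow> 'v set) \<times> ('v \<Rightarrow> 'v \<Rightarrow> bool)"

text \<open>Coset complex (as its 1-skeleton): vertices of part i are the cosets g K_i, tagged by i.\<close>
definition coset_graph :: "('g, 'b) monoid_scheme \<Rightarrow> ('i \<Rightarrow> 'g set) \<Rightarrow> ('i, 'i \<times> 'g set) partite_graph" where
  "coset_graph G K =
     ((\<lambda>i. {(i, g <#\<^bsub>G\<^esub> K i) | g. g \<in> carrier G}),
      (\<lambda>u v. fst u \<noteq> fst v \<and> snd u \<inter> snd v \<noteq> {}))"

definition relabel :: "('i \<Rightarrow> 'i) \<Rightarrow> ('i, 'v) partite_graph \<Rightarrow> ('i, 'v) partite_graph" where
  "relabel p Gr = ((\<lambda>i. fst Gr (p i)), snd Gr)"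

definition partite_prod :: "'i set \<Rightarrow> 's set \<Rightarrow> ('s \<Rightarrow> ('i, 'v) partite_graph)
     \<Rightarrow> ('i, 's \<Rightarrow> 'v) partite_graph" where
  "partite_prod I S Gr =
     ((\<lambda>i. \<Pi>\<^sub>E s\<in>S. fst (Gr s) i),
      (\<lambda>f g. (\<exists>i\<in>I. \<exists>j\<in>I. i \<noteq> j \<and> f \<in> (\<Pi>\<^sub>E s\<in>S. fst (Gr s) i) \<and> g \<in> (\<Pi>\<^sub>E s\<in>S. fst (Gr s) j))
             \<and> (\<forall>s\<in>S. snd (Gr s) (f s) (g s))))"

definition symmetrization :: "'i set \<Rightarrow> ('i, 'v) partite_graph \<Rightarrow> ('i, ('i \<Rightarrow> 'i) \<Rightarrow> 'v) partite_graph" where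
  "symmetrization I Gr = partite_prod I {p. p permutes I} (\<lambda>p. relabel p Gr)"

definition partite_iso :: "'i set \<Rightarrow> ('i, 'v) partite_graph \<Rightarrow> ('i, 'w) partite_graph \<Rightarrow> ('v \<Rightarrow> 'w) \<Rightarrow> bool" where
  "partite_iso I Gr Hr \<phi> \<longleftrightarrow>
     (\<forall>i\<in>I. bij_betw \<phi> (fst Gr i) (fst Hr i)) \<and>
     inj_on \<phi> (\<Union>i\<in>I. fst Gr i) \<and>
     (\<forall>u\<in>(\<Union>i\<in>I. fst Gr i). \<forall>v\<in>(\<Union>i\<in>I. fst Gr i). snd Gr u v \<longleftrightarrow> snd Hr (\<phi> u) (\<phi> v))"

end

theory Submission
  imports Defs
begin

lemma prod_set_mult:
  assumes "\<And>p. p \<in> S \<Longrightarrow> A p \<subseteq> carrier G" "\<And>p. p \<in> S \<Longrightarrow> B p \<subseteq> carrier G"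
  shows "(\<Pi>\<^sub>E p\<in>S. A p) <#>\<^bsub>product_group S (\<lambda>_. G)\<^esub> (\<Pi>\<^sub>E p\<in>S. B p)
       = (\<Pi>\<^sub>E p\<in>S. A p <#>\<^bsub>G\<^esub> B p)"
proof
  show "(\<Pi>\<^sub>E p\<in>S. A p) <#>\<^bsub>product_group S (\<lambda>_. G)\<^esub> (\<Pi>\<^sub>E p\<in>S. B p)
       \<subseteq> (\<Pi>\<^sub>E p\<in>S. A p <#>\<^bsub>G\<^esub> B p)"
    by (auto simp: set_mult_def PiE_iff; blast)
next
  show "(\<Pi>\<^sub>E p\<in>S. A p <#>\<^bsub>G\<^esub> B p) \<subseteq> (\<Pi>\<^sub>E p\<in>S. A p) <#>\<^bsub>product_group S (\<lambda>_. G)\<^esub> (\<Pi>\<^sub>E p\<in>S. B p)"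
  proof
    fix x assume x: "x \<in> (\<Pi>\<^sub>E p\<in>S. A p <#>\<^bsub>G\<^esub> B p)"
    then have "\<forall>p\<in>S. \<exists>ab. fst ab \<in> A p \<and> snd ab \<in> B p \<and> x p = fst ab \<otimes>\<^bsub>G\<^esub> snd ab"
      by (fastforce simp: set_mult_def PiE_iff)
    then obtain f where f: "\<forall>p\<in>S. fst (f p) \<in> A p \<and> snd (f p) \<in> B p \<and> x p = fst (f p) \<otimes>\<^bsub>G\<^esub> snd (f p)"
      by metis
    define a where "a = (\<lambda>p\<in>S. fst (f p))"
    define b where "b = (\<lambda>p\<in>S. snd (f p))"
    have "a \<in> (\<Pi>\<^sub>E p\<in>S. A p)" "b \<in> (\<Pi>\<^sub>E p\<in>S. B p)" using f by (auto simp: a_def b_def)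
    moreover have "x = a \<otimes>\<^bsub>product_group S (\<lambda>_. G)\<^esub> b"
      using f x by (auto simp: a_def b_def PiE_iff fun_eq_iff extensional_def)
    ultimately show "x \<in> (\<Pi>\<^sub>E p\<in>S. A p) <#>\<^bsub>product_group S (\<lambda>_. G)\<^esub> (\<Pi>\<^sub>E p\<in>S. B p)"
      by (auto simp: set_mult_def)
  qed
qed

lemma prod_l_coset:
  assumes "g \<in> extensional S"
  shows "g <#\<^bsub>product_group S (\<lambda>_. G)\<^esub> (\<Pi>\<^sub>E p\<in>S. B p) = (\<Pi>\<^sub>E p\<in>S. g p <#\<^bsub>G\<^esub> B p)"
proof
  show "g <#\<^bsub>product_group S (\<lambda>_. G)\<^esub> (\<Pi>\<^sub>E p\<in>S. B p) \<subseteq> (\<Pi>\<^sub>E p\<in>S. g p <#\<^bsub>G\<^esub> B p)"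
    by (auto simp: l_coset_def PiE_iff)
next
  show "(\<Pi>\<^sub>E p\<in>S. g p <#\<^bsub>G\<^esub> B p) \<subseteq> g <#\<^bsub>product_group S (\<lambda>_. G)\<^esub> (\<Pi>\<^sub>E p\<in>S. B p)"
  proof
    fix x assume x: "x \<in> (\<Pi>\<^sub>E p\<in>S. g p <#\<^bsub>G\<^esub> B p)"
    then have "\<forall>p\<in>S. \<exists>b. b \<in> B p \<and> x p = g p \<otimes>\<^bsub>G\<^esub> b"
      by (fastforce simp: l_coset_def PiE_iff)
    then obtain f where f: "\<forall>p\<in>S. f p \<in> B p \<and> x p = g p \<otimes>\<^bsub>G\<^esub> f p"
      by metis
    define b where "b = (\<lambda>p\<in>S. f p)"
    have "b \<in> (\<Pi>\<^sub>E p\<in>S. B p)" using f by (auto simp: b_def)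
    moreover have "x = g \<otimes>\<^bsub>product_group S (\<lambda>_. G)\<^esub> b"
      using f x by (auto simp: b_def PiE_iff fun_eq_iff extensional_def)
    ultimately show "x \<in> g <#\<^bsub>product_group S (\<lambda>_. G)\<^esub> (\<Pi>\<^sub>E p\<in>S. B p)"
      by (auto simp: l_coset_def)
  qed
qed


lemma gen_prod:
  assumes grp: "group G" and fin: "finite S"
    and sA: "\<And>p. p \<in> S \<Longrightarrow> subgroup (A p) G" and sB: "\<And>p. p \<in> S \<Longrightarrow> subgroup (B p) G"
  shows "generate (product_group S (\<lambda>_. G)) ((\<Pi>\<^sub>E p\<in>S. A p) \<union> (\<Pi>\<^sub>E p\<in>S. B p))
       = (\<Pi>\<^sub>E p\<in>S. generate G (A p \<union> B p))"
proof -
  let ?GS = "product_group S (\<lambda>_. G)"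
  have gs: "group ?GS" using grp by simp
  have ABc: "A p \<union> B p \<subseteq> carrier G" if "p \<in> S" for p
    using sA sB that subgroup.subset by blast
  have Csub: "subgroup (generate G (A p \<union> B p)) G" if "p \<in> S" for p
    using group.generate_is_subgroup[OF grp ABc[OF that]] .
  have Cc: "generate G (A p \<union> B p) \<subseteq> carrier G" if "p \<in> S" for p
    using Csub[OF that] subgroup.subset by blast
  have "(\<Pi>\<^sub>E p\<in>S. generate G (A p \<union> B p)) = generate ?GS ((\<Pi>\<^sub>E p\<in>S. A p) \<union> (\<Pi>\<^sub>E p\<in>S. B p))"
  proof (rule group.generateI[OF gs])
    show "subgroup (\<Pi>\<^sub>E p\<in>S. generate G (A p \<union> B p)) ?GS"
      using PiE_subgroup_product_group[of S "\<lambda>_. G"] grp Csub by blast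
    show "(\<Pi>\<^sub>E p\<in>S. A p) \<union> (\<Pi>\<^sub>E p\<in>S. B p) \<subseteq> (\<Pi>\<^sub>E p\<in>S. generate G (A p \<union> B p))"
      by (auto simp: PiE_iff intro: generate.incl)
  next
    fix H assume H: "subgroup H ?GS" "(\<Pi>\<^sub>E p\<in>S. A p) \<union> (\<Pi>\<^sub>E p\<in>S. B p) \<subseteq> H"
    define e where "e = (\<lambda>q y. (\<lambda>p\<in>S. if p = q then y else \<one>\<^bsub>G\<^esub>))"
    have one: "(\<lambda>p\<in>S. \<one>\<^bsub>G\<^esub>) \<in> H" using subgroup.one_closed[OF H(1)] by simp
    have esub: "subgroup {y \<in> carrier G. e q y \<in> H} G" if q: "q \<in> S" for q
    proof
      show "{y \<in> carrier G. e q y \<in> H} \<subseteq> carrier G" by auto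
      show "\<one>\<^bsub>G\<^esub> \<in> {y \<in> carrier G. e q y \<in> H}"
        using one grp by (simp add: e_def group.is_monoid monoid.one_closed)
    next
      fix x y assume x: "x \<in> {y \<in> carrier G. e q y \<in> H}" and y: "y \<in> {y \<in> carrier G. e q y \<in> H}"
      have "e q x \<otimes>\<^bsub>?GS\<^esub> e q y \<in> H" using x y subgroup.m_closed[OF H(1)] by blast
      moreover have "e q x \<otimes>\<^bsub>?GS\<^esub> e q y = e q (x \<otimes>\<^bsub>G\<^esub> y)"
        using grp by (auto simp: e_def fun_eq_iff group.is_monoid monoid.one_closed)
      ultimately show "x \<otimes>\<^bsub>G\<^esub> y \<in> {y \<in> carrier G. e q y \<in> H}"
        using x y grp by (simp add: group.is_monoid monoid.m_closed)
    next
      fix x assume x: "x \<in> {y \<in> carrier G. e q y \<in> H}"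
      have ec: "e q x \<in> carrier ?GS" using x grp by (auto simp: e_def PiE_iff group.is_monoid monoid.one_closed)
      have "inv\<^bsub>?GS\<^esub> e q x \<in> H" using x subgroup.m_inv_closed[OF H(1)] by blast
      moreover have "inv\<^bsub>?GS\<^esub> e q x = e q (inv\<^bsub>G\<^esub> x)"
        using ec grp by (auto simp: e_def fun_eq_iff group.is_monoid monoid.inv_one)
      ultimately show "inv\<^bsub>G\<^esub> x \<in> {y \<in> carrier G. e q y \<in> H}"
        using x grp by simp
    qed
    have einc: "A q \<union> B q \<subseteq> {y \<in> carrier G. e q y \<in> H}" if q: "q \<in> S" for q
    proof
      fix y assume y: "y \<in> A q \<union> B q"
      have "e q y \<in> (\<Pi>\<^sub>E p\<in>S. A p) \<union> (\<Pi>\<^sub>E p\<in>S. B p)"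
        using y q sA sB by (auto simp: e_def PiE_iff subgroup.one_closed)
      then show "y \<in> {y \<in> carrier G. e q y \<in> H}" using H(2) y ABc[OF q] by blast
    qed
    have egen: "e q y \<in> H" if "q \<in> S" "y \<in> generate G (A q \<union> B q)" for q y
      using group.generate_subgroup_incl[OF grp einc[OF that(1)] esub[OF that(1)]] that(2) by blast
    show "(\<Pi>\<^sub>E p\<in>S. generate G (A p \<union> B p)) \<subseteq> H"
    proof
      fix x assume x: "x \<in> (\<Pi>\<^sub>E p\<in>S. generate G (A p \<union> B p))"
      have ind: "T \<subseteq> S \<Longrightarrow> (\<lambda>p\<in>S. if p \<in> T then x p else \<one>\<^bsub>G\<^esub>) \<in> H" for T
      proof (induction T rule: infinite_finite_induct)
        case (infinite T)
        then show ?case using fin finite_subset by blast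
      next
        case empty
        then show ?case using one by (simp add: restrict_def)
      next
        case (insert q T)
        have xc: "x p \<in> carrier G" if "p \<in> S" for p using x Cc that by blast
        have "(\<lambda>p\<in>S. if p \<in> T then x p else \<one>\<^bsub>G\<^esub>) \<otimes>\<^bsub>?GS\<^esub> e q (x q) \<in> H"
        proof (rule subgroup.m_closed[OF H(1)])
          show "(\<lambda>p\<in>S. if p \<in> T then x p else \<one>\<^bsub>G\<^esub>) \<in> H" using insert by (simp add: restrict_def)
          show "e q (x q) \<in> H" using insert(4) x egen by auto
        qed
        moreover have "(\<lambda>p\<in>S. if p \<in> T then x p else \<one>\<^bsub>G\<^esub>) \<otimes>\<^bsub>?GS\<^esub> e q (x q)
            = (\<lambda>p\<in>S. if p \<in> insert q T then x p else \<one>\<^bsub>G\<^esub>)"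
          using insert xc grp by (auto simp: e_def fun_eq_iff group.is_monoid monoid.one_closed)
        ultimately have "(\<lambda>p\<in>S. if p \<in> insert q T then x p else \<one>\<^bsub>G\<^esub>) \<in> H" by argo
        then show ?case unfolding restrict_def by assumption
      qed
      have xe: "(\<lambda>p\<in>S. if p \<in> S then x p else \<one>\<^bsub>G\<^esub>) = x"
        using x by (auto simp: PiE_iff extensional_def fun_eq_iff)
      show "x \<in> H" using ind[OF order_refl] unfolding xe .
    qed
  qed
  then show ?thesis by simp
qed


lemma PiE_Int_INT: "(\<Pi>\<^sub>E p\<in>S. C p \<inter> (\<Inter>j\<in>\<tau>. D j p)) = (\<Pi>\<^sub>E p\<in>S. C p) \<inter> (\<Inter>j\<in>\<tau>. \<Pi>\<^sub>E p\<in>S. D j p)"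
  by (auto simp: PiE_iff)

lemma Ktau_prod:
  "Ktau (product_group S (\<lambda>_. G)) (\<lambda>i. \<Pi>\<^sub>E p\<in>S. K (p i)) \<tau> = (\<Pi>\<^sub>E p\<in>S. Ktau G K (p ` \<tau>))"
proof (cases "\<tau> = {}")
  case True
  then show ?thesis by (simp add: Ktau_def)
next
  case False
  then show ?thesis
    by (auto simp: Ktau_def PiE_iff image_image)
qed

lemma Ktau_sub:
  assumes "\<forall>i\<in>I. subgroup (K i) G" "group G" "\<sigma> \<subseteq> I"
  shows "subgroup (Ktau G K \<sigma>) G"
proof (cases "\<sigma> = {}")
  case True
  then show ?thesis using assms by (simp add: Ktau_def group.subgroup_self)
next
  case False
  then show ?thesis using assms subgroup_Inter[of "K ` \<sigma>" G] by (auto simp: Ktau_def)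
qed

theorem mainTheorem13:
  fixes G :: "('g, 'b) monoid_scheme" and I :: "'i set" and K :: "'i \<Rightarrow> 'g set" and n :: nat
  assumes "finite I" and "card I = Suc n"
    and "subgroup_geometry_system G I K"
  defines "S \<equiv> {p. p permutes I}"
  defines "GS \<equiv> product_group S (\<lambda>_. G)"
  defines "KS \<equiv> (\<lambda>i. \<Pi>\<^sub>E p\<in>S. K (p i))"
  shows "(\<exists>\<phi>. partite_iso I (symmetrization I (coset_graph G K)) (coset_graph GS KS) \<phi>)
         \<and> subgroup_geometry_system GS I KS"
proof -
  note sgs = assms(3)[unfolded subgroup_geometry_system_def]
  have grp: "group G" using sgs by (rule conjunct1)
  have finI: "finite I" using sgs[THEN conjunct2] by (rule conjunct1)
  have sub: "\<forall>i\<in>I. subgroup (K i) G" using sgs[THEN conjunct2, THEN conjunct2] by (rule conjunct1)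
  have A1': "\<forall>\<tau> \<tau>'. \<tau> \<subseteq> I \<longrightarrow> \<tau>' \<subseteq> I \<longrightarrow>
        Ktau G K (\<tau> \<inter> \<tau>') = generate G (Ktau G K \<tau> \<union> Ktau G K \<tau>')"
    using sgs[THEN conjunct2, THEN conjunct2, THEN conjunct2] by (rule conjunct1)
  have A2': "\<forall>\<tau> i. \<tau> \<subset> I \<longrightarrow> i \<in> I - \<tau> \<longrightarrow>
        Ktau G K \<tau> <#>\<^bsub>G\<^esub> K i = carrier G \<inter> (\<Inter>j\<in>\<tau>. K j <#>\<^bsub>G\<^esub> K i)"
    using sgs[THEN conjunct2, THEN conjunct2, THEN conjunct2, THEN conjunct2] by (rule conjunct1)
  have A3': "\<forall>i\<in>I. Ktau G K I \<noteq> Ktau G K (I - {i})"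
    using sgs[THEN conjunct2, THEN conjunct2, THEN conjunct2, THEN conjunct2] by (rule conjunct2)
  have A1: "\<And>\<tau> \<tau>'. \<tau> \<subseteq> I \<Longrightarrow> \<tau>' \<subseteq> I \<Longrightarrow>
        Ktau G K (\<tau> \<inter> \<tau>') = generate G (Ktau G K \<tau> \<union> Ktau G K \<tau>')"
    using A1' by blast
  have A2: "\<And>\<tau> i. \<tau> \<subset> I \<Longrightarrow> i \<in> I - \<tau> \<Longrightarrow>
        Ktau G K \<tau> <#>\<^bsub>G\<^esub> K i = carrier G \<inter> (\<Inter>j\<in>\<tau>. K j <#>\<^bsub>G\<^esub> K i)"
    using A2' by blast
  have A3: "\<And>i. i\<in>I \<Longrightarrow> Ktau G K I \<noteq> Ktau G K (I - {i})"
    using A3' by blast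
  have finS: "finite S" unfolding S_def using finite_permutations[OF finI] .
  have idS: "id \<in> S" unfolding S_def by simp
  have pperm: "p permutes I" if "p \<in> S" for p using that by (simp add: S_def)
  have pinj: "inj p" if "p \<in> S" for p by (rule permutes_inj[OF pperm[OF that]])
  have pim: "p i \<in> I" if "p \<in> S" "i \<in> I" for p i
    using that(2) permutes_in_image[OF pperm[OF that(1)]] by simp
  have KtauGS: "Ktau GS KS \<tau> = (\<Pi>\<^sub>E p\<in>S. Ktau G K (p ` \<tau>))" for \<tau>
    unfolding GS_def KS_def by (rule Ktau_prod)
  have gGS: "group GS" unfolding GS_def using grp by simp
  have KSsub: "subgroup (Ktau G K (p ` \<tau>)) G" if "p \<in> S" "\<tau> \<subseteq> I" for p \<tau>
    using Ktau_sub[OF sub grp] pim that by blast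
  have part2: "subgroup_geometry_system GS I KS"
    unfolding subgroup_geometry_system_def
  proof (intro conjI allI impI ballI)
    show "group GS" by (rule gGS)
    show "finite I" by (rule finI)
  next
    fix i assume i: "i \<in> I"
    show "subgroup (KS i) GS"
      unfolding KS_def GS_def
      using PiE_subgroup_product_group[of S "\<lambda>_. G" "\<lambda>p. K (p i)"] grp sub pim i by blast
  next
    fix \<tau> \<tau>' assume t: "\<tau> \<subseteq> I" "\<tau>' \<subseteq> I"
    have e: "Ktau G K (p ` (\<tau> \<inter> \<tau>')) = generate G (Ktau G K (p ` \<tau>) \<union> Ktau G K (p ` \<tau>'))"
      if p: "p \<in> S" for p
    proof -
      have ie: "p ` (\<tau> \<inter> \<tau>') = p ` \<tau> \<inter> p ` \<tau>'" using pinj[OF p] by (simp add: image_Int)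
      have "p ` \<tau> \<subseteq> I" "p ` \<tau>' \<subseteq> I" using t pim p by auto
      from A1[OF this] show ?thesis unfolding ie .
    qed
    have "generate GS (Ktau GS KS \<tau> \<union> Ktau GS KS \<tau>') =
          (\<Pi>\<^sub>E p\<in>S. generate G (Ktau G K (p ` \<tau>) \<union> Ktau G K (p ` \<tau>')))"
      unfolding KtauGS unfolding GS_def by (rule gen_prod[OF grp finS]) (use KSsub t in auto)
    then show "Ktau GS KS (\<tau> \<inter> \<tau>') = generate GS (Ktau GS KS \<tau> \<union> Ktau GS KS \<tau>')"
      unfolding KtauGS using e by (auto intro!: PiE_cong)
  next
    fix \<tau> i assume t: "\<tau> \<subset> I" and i: "i \<in> I - \<tau>"
    have e: "Ktau G K (p ` \<tau>) <#>\<^bsub>G\<^esub> K (p i) = carrier G \<inter> (\<Inter>j\<in>\<tau>. K (p j) <#>\<^bsub>G\<^esub> K (p i))"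
      if p: "p \<in> S" for p
    proof -
      have "p i \<notin> p ` \<tau>" using pinj[OF p] i by (auto dest: injD)
      moreover have "p ` \<tau> \<subseteq> I" "p i \<in> I" using t i pim p by auto
      ultimately have "p ` \<tau> \<subset> I" "p i \<in> I - p ` \<tau>" by auto
      from A2[OF this] show ?thesis by (simp add: image_image)
    qed
    have c1: "Ktau G K (p ` \<tau>) \<subseteq> carrier G" if "p \<in> S" for p
      using subgroup.subset[OF KSsub[OF that]] t by auto
    have c2: "K (p j) \<subseteq> carrier G" if "p \<in> S" "j \<in> I" for p j
      using subgroup.subset sub pim that by blast
    have "Ktau GS KS \<tau> <#>\<^bsub>GS\<^esub> KS i = (\<Pi>\<^sub>E p\<in>S. Ktau G K (p ` \<tau>) <#>\<^bsub>G\<^esub> K (p i))"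
      unfolding KtauGS unfolding GS_def KS_def
      by (rule prod_set_mult[OF c1 c2]) (use i in auto)
    also have "\<dots> = (\<Pi>\<^sub>E p\<in>S. carrier G \<inter> (\<Inter>j\<in>\<tau>. K (p j) <#>\<^bsub>G\<^esub> K (p i)))"
      using e by (auto intro!: PiE_cong)
    also have "\<dots> = carrier GS \<inter> (\<Inter>j\<in>\<tau>. (\<Pi>\<^sub>E p\<in>S. K (p j) <#>\<^bsub>G\<^esub> K (p i)))"
      unfolding GS_def carrier_product_group by (rule PiE_Int_INT)
    also have "\<dots> = carrier GS \<inter> (\<Inter>j\<in>\<tau>. KS j <#>\<^bsub>GS\<^esub> KS i)"
    proof -
      have "KS j <#>\<^bsub>GS\<^esub> KS i = (\<Pi>\<^sub>E p\<in>S. K (p j) <#>\<^bsub>G\<^esub> K (p i))" if "j \<in> \<tau>" for j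
        unfolding GS_def KS_def
        by (rule prod_set_mult[OF c2 c2]) (use i t that in auto)
      then show ?thesis by (intro arg_cong2[where f="(\<inter>)"] refl INF_cong) auto
    qed
    finally show "Ktau GS KS \<tau> <#>\<^bsub>GS\<^esub> KS i = carrier GS \<inter> (\<Inter>j\<in>\<tau>. KS j <#>\<^bsub>GS\<^esub> KS i)" .
  next
    fix i assume i: "i \<in> I"
    show "Ktau GS KS I \<noteq> Ktau GS KS (I - {i})"
    proof
      assume eq: "Ktau GS KS I = Ktau GS KS (I - {i})"
      have ne: "Ktau G K (p ` \<tau>) \<noteq> {}" if "p \<in> S" "\<tau> \<subseteq> I" for p \<tau>
        using KSsub[OF that] subgroup.one_closed by blast
      have "\<forall>p\<in>S. Ktau G K (p ` I) = Ktau G K (p ` (I - {i}))"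
        using eq unfolding KtauGS PiE_eq_iff using ne by blast
      then have "Ktau G K (id ` I) = Ktau G K (id ` (I - {i}))" using idS by blast
      then show False using A3[OF i] by simp
    qed
  qed
  have part1: "\<exists>\<phi>. partite_iso I (symmetrization I (coset_graph G K)) (coset_graph GS KS) \<phi>"
  proof -
    define P where "P = (\<lambda>i. \<Pi>\<^sub>E p\<in>S. {(p i, g <#\<^bsub>G\<^esub> K (p i)) | g. g \<in> carrier G})"
    define Sym where "Sym = symmetrization I (coset_graph G K)"
    have fS: "fst Sym i = P i" for i
      unfolding Sym_def symmetrization_def partite_prod_def relabel_def coset_graph_def P_def S_def
      by simp
    have sS: "snd Sym u v = ((\<exists>i\<in>I. \<exists>j\<in>I. i \<noteq> j \<and> u \<in> P i \<and> v \<in> P j)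
         \<and> (\<forall>p\<in>S. fst (u p) \<noteq> fst (v p) \<and> snd (u p) \<inter> snd (v p) \<noteq> {}))" for u v
      unfolding Sym_def symmetrization_def partite_prod_def relabel_def coset_graph_def P_def S_def
      by simp
    have fQ: "fst (coset_graph GS KS) i =
        {(i, \<Pi>\<^sub>E p\<in>S. g p <#\<^bsub>G\<^esub> K (p i)) | g. g \<in> (\<Pi>\<^sub>E p\<in>S. carrier G)}" for i
    proof -
      have "g <#\<^bsub>GS\<^esub> KS i = (\<Pi>\<^sub>E p\<in>S. g p <#\<^bsub>G\<^esub> K (p i))" if "g \<in> (\<Pi>\<^sub>E p\<in>S. carrier G)" for g
        unfolding GS_def KS_def by (rule prod_l_coset) (use that PiE_iff in blast)
      then show ?thesis unfolding coset_graph_def GS_def by auto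
    qed
    have sQ: "snd (coset_graph GS KS) x y = (fst x \<noteq> fst y \<and> snd x \<inter> snd y \<noteq> {})" for x y
      unfolding coset_graph_def by simp
    define \<phi> where "\<phi> = (\<lambda>u::('i \<Rightarrow> 'i) \<Rightarrow> 'i \<times> 'g set. (fst (u id), \<Pi>\<^sub>E p\<in>S. snd (u p)))"
    have Pfst: "fst (u p) = p i" if "u \<in> P i" "p \<in> S" for u p i
      using that unfolding P_def by (auto simp: PiE_iff)
    have Pi: "i = j" if "u \<in> P i" "u \<in> P j" for u i j
      using Pfst[OF that(1) idS] Pfst[OF that(2) idS] by simp
    have Pne: "snd (u p) \<noteq> {}" if "u \<in> P i" "p \<in> S" "i \<in> I" for u p i
    proof -
      have "u p \<in> {(p i, g <#\<^bsub>G\<^esub> K (p i)) | g. g \<in> carrier G}"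
        using PiE_mem[OF that(1)[unfolded P_def] that(2)] by simp
      then obtain g where "g \<in> carrier G" "u p = (p i, g <#\<^bsub>G\<^esub> K (p i))"
        by blast
      then show ?thesis using group.lcos_self[OF grp, of g "K (p i)"] sub pim that by auto
    qed
    have phi_fst: "fst (\<phi> u) = i" if "u \<in> P i" for u i
      using Pfst[OF that idS] by (simp add: \<phi>_def)
    have inj: "inj_on \<phi> (\<Union>i\<in>I. P i)"
    proof
      fix u v assume u: "u \<in> (\<Union>i\<in>I. P i)" and v: "v \<in> (\<Union>i\<in>I. P i)" and e: "\<phi> u = \<phi> v"
      obtain i j where i: "i \<in> I" "u \<in> P i" and j: "j \<in> I" "v \<in> P j" using u v by blast
      have ij: "i = j" using phi_fst[OF i(2)] phi_fst[OF j(2)] e by simp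
      have "(\<Pi>\<^sub>E p\<in>S. snd (u p)) = (\<Pi>\<^sub>E p\<in>S. snd (v p))" using e by (simp add: \<phi>_def)
      then have sn: "\<forall>p\<in>S. snd (u p) = snd (v p)"
        unfolding PiE_eq_iff using Pne i j by blast
      show "u = v"
      proof (rule extensionalityI)
        show "u \<in> extensional S" "v \<in> extensional S" using i j unfolding P_def by (auto simp: PiE_iff)
      next
        fix p assume p: "p \<in> S"
        show "u p = v p" using sn p Pfst[OF i(2) p] Pfst[OF j(2) p] ij by (simp add: prod_eq_iff)
      qed
    qed
    have img: "\<phi> ` P i = fst (coset_graph GS KS) i" if i: "i \<in> I" for i
    proof
      show "\<phi> ` P i \<subseteq> fst (coset_graph GS KS) i"
      proof
        fix x assume "x \<in> \<phi> ` P i"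
        then obtain u where u: "u \<in> P i" and x: "x = \<phi> u" by blast
        have "\<forall>p\<in>S. \<exists>g. g \<in> carrier G \<and> u p = (p i, g <#\<^bsub>G\<^esub> K (p i))"
          using u unfolding P_def by (auto simp: PiE_iff)
        then obtain g where g: "\<forall>p\<in>S. g p \<in> carrier G \<and> u p = (p i, g p <#\<^bsub>G\<^esub> K (p i))"
          by metis
        have "restrict g S \<in> (\<Pi>\<^sub>E p\<in>S. carrier G)" using g by auto
        moreover have "x = (i, \<Pi>\<^sub>E p\<in>S. restrict g S p <#\<^bsub>G\<^esub> K (p i))"
          using phi_fst[OF u] g x by (auto simp: \<phi>_def intro!: PiE_cong)
        ultimately show "x \<in> fst (coset_graph GS KS) i" unfolding fQ by blast
      qed
    next
      show "fst (coset_graph GS KS) i \<subseteq> \<phi> ` P i"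
      proof
        fix x assume "x \<in> fst (coset_graph GS KS) i"
        then obtain g where g: "g \<in> (\<Pi>\<^sub>E p\<in>S. carrier G)" and x: "x = (i, \<Pi>\<^sub>E p\<in>S. g p <#\<^bsub>G\<^esub> K (p i))"
          unfolding fQ by blast
        define u where "u = (\<lambda>p\<in>S. (p i, g p <#\<^bsub>G\<^esub> K (p i)))"
        have u: "u \<in> P i" using g unfolding u_def P_def by auto
        have "\<phi> u = x" using phi_fst[OF u] x by (auto simp: \<phi>_def u_def intro!: PiE_cong)
        then show "x \<in> \<phi> ` P i" using u by blast
      qed
    qed
    have "partite_iso I Sym (coset_graph GS KS) \<phi>"
      unfolding partite_iso_def fS
    proof (intro conjI ballI)
      fix i assume i: "i \<in> I"
      show "bij_betw \<phi> (P i) (fst (coset_graph GS KS) i)"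
        unfolding bij_betw_def using img[OF i] inj_on_subset[OF inj] i by blast
    next
      show "inj_on \<phi> (\<Union>i\<in>I. P i)" by (rule inj)
    next
      fix u v assume u: "u \<in> (\<Union>i\<in>I. P i)" and v: "v \<in> (\<Union>i\<in>I. P i)"
      obtain i j where i: "i \<in> I" "u \<in> P i" and j: "j \<in> I" "v \<in> P j" using u v by blast
      have c1: "(\<exists>i\<in>I. \<exists>j\<in>I. i \<noteq> j \<and> u \<in> P i \<and> v \<in> P j) = (i \<noteq> j)"
        using i j Pi by blast
      have c2: "(\<forall>p\<in>S. fst (u p) \<noteq> fst (v p)) = (i \<noteq> j)"
      proof
        assume "\<forall>p\<in>S. fst (u p) \<noteq> fst (v p)"
        then show "i \<noteq> j" using Pfst[OF i(2) idS] Pfst[OF j(2) idS] idS by force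
      next
        assume "i \<noteq> j"
        then show "\<forall>p\<in>S. fst (u p) \<noteq> fst (v p)"
          using Pfst[OF i(2)] Pfst[OF j(2)] pinj by (auto dest: injD)
      qed
      have c3: "(snd (\<phi> u) \<inter> snd (\<phi> v) \<noteq> {}) = (\<forall>p\<in>S. snd (u p) \<inter> snd (v p) \<noteq> {})"
        by (simp add: \<phi>_def PiE_Int PiE_eq_empty_iff)
      show "snd Sym u v = snd (coset_graph GS KS) (\<phi> u) (\<phi> v)"
        unfolding sS sQ phi_fst[OF i(2)] phi_fst[OF j(2)] c3 using c1 c2 by blast
    qed
    then show ?thesis unfolding Sym_def by blast
  qed
  show ?thesis using part1 part2 by blast
qed

end
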